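(* Let $s\in\{1/2,1,3/2,\dots\}$, $N=2s$, and let $C,D,E$ be linear operators on $\mathcal{H}_s$ with $C=DE$. Let $p_C,p_D,p_E$ be their Majorana polynomials. Then \[ p_C(z)=(N!)^{-1}\,p_D(z_a,\partial_a)\,p_E(z_a,z^a),\qquad p_C(z)=(N!)^{-1}\,p_E(\partial^a,z^a)\,p_D(z_a,z^a). \] Here $p_D(z_a,\partial_a)$ denotes the differential operator obtained from $p_D(z_1,z_2,z^1,z^2)$ by replacing each $z^a$ by $\partial_a=\partial/\partial z_a$, and $p_E(\partial^a,z^a)$ the one obtained from $p_E$ by replacing each $z_a$ by $\partial^a=\partial/\partial z^a$; in each monomial the derivatives are placed to the right of the multiplication factors, so that they act only on the polynomial to the right.
   Context: $\mathcal{H}_s$ is the spin-$s$ Hilbert space with orthonormal $S_z$-eigenbasis $\{|s,m\rangle\}_{m=-s}^{s}$. Treat $z_1,z_2,z^1,z^2$ as four independent complex variables (formally $z^a=\overline{z_a}$), with $\partial_a z_b=\partial^a z^b=\delta_{ab}$, $\partial_a z^b=\partial^a z_b=0$. Define the bra $\langle -\mathbf n_B|=\sum_{m=-s}^{s}(-1)^{s-m}\sqrt{\binom{2s}{s-m}}\,z_1^{s+m}z_2^{s-m}\langle s,m|$ and the ket $|-\mathbf n_B\rangle=\sum_{m=-s}^{s}(-1)^{s-m}\sqrt{\binom{2s}{s-m}}\,(z^1)^{s+m}(z^2)^{s-m}|s,m\rangle$. The Majorana polynomial of an operator $C$ on $\mathcal{H}_s$ is $p_C(z)=\langle -\mathbf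 n_B|C|-\mathbf n_B\rangle$, a polynomial in $(z_1,z_2,z^1,z^2)$ each of whose monomials $z_1^\alpha z_2^\beta(z^1)^\gamma(z^2)^\delta$ has $\alpha+\beta=\gamma+\delta=N$. Repeated indices $a\in\{1,2\}$ are summed. *)

theory Defs
  imports "HOL-Analysis.Analysis"
begin

text \<open>N = 2s. The basis vector |s,m> is indexed by j = s + m in {0..N};
  then s - m = N - j. An operator on H_s is given by its matrix entries
  Op j k = <s,m|Op|s,m'> with j = s+m, k = s+m' (entries outside {0..N} are irrelevant).
  Polynomials in the four independent variables z_1, z_2, z^1, z^2 are represented as
  functions of four complex arguments (z1, z2, w1, w2), with w_a standing for z^a.\<close>

definition mcoef :: "nat \<Rightarrow> nat \<Rightarrow> complex" where
  "mcoef N j = (-1) ^ (N - j) * complex_of_real (sqrt (real (N choose (N - j))))"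

text \<open>Majorana polynomial p_C(z) = <-n_B| C |-n_B>.\<close>
definition majorana ::
  "nat \<Rightarrow> (nat \<Rightarrow> nat \<Rightarrow> complex) \<Rightarrow> complex \<Rightarrow> complex \<Rightarrow> complex \<Rightarrow> complex \<Rightarrow> complex" where
  "majorana N C z1 z2 w1 w2 =
     (\<Sum>j\<le>N. \<Sum>k\<le>N. mcoef N j * mcoef N k * z1 ^ j * z2 ^ (N - j) * C j k * w1 ^ k * w2 ^ (N - k))"

type_synonym fn4 = "complex \<Rightarrow> complex \<Rightarrow> complex \<Rightarrow> complex \<Rightarrow> complex"

definition pd_z1 :: "fn4 \<Rightarrow> fn4" where
  "pd_z1 f = (\<lambda>z1 z2 w1 w2. deriv (\<lambda>t. f t z2 w1 w2) z1)"
definition pd_z2 :: "fn4 \<Rightarrow> fn4" where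
  "pd_z2 f = (\<lambda>z1 z2 w1 w2. deriv (\<lambda>t. f z1 t w1 w2) z2)"
definition pd_w1 :: "fn4 \<Rightarrow> fn4" where
  "pd_w1 f = (\<lambda>z1 z2 w1 w2. deriv (\<lambda>t. f z1 z2 t w2) w1)"
definition pd_w2 :: "fn4 \<Rightarrow> fn4" where
  "pd_w2 f = (\<lambda>z1 z2 w1 w2. deriv (\<lambda>t. f z1 z2 w1 t) w2)"

definition majorana_op_left :: "nat \<Rightarrow> (nat \<Rightarrow> nat \<Rightarrow> complex) \<Rightarrow> fn4 \<Rightarrow> fn4" where
  "majorana_op_left N D f = (\<lambda>z1 z2 w1 w2.
     (\<Sum>j\<le>N. \<Sum>k\<le>N. mcoef N j * mcoef N k * z1 ^ j * z2 ^ (N - j) * D j k *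
        ((pd_z1 ^^ k) ((pd_z2 ^^ (N - k)) f)) z1 z2 w1 w2))"

definition majorana_op_right :: "nat \<Rightarrow> (nat \<Rightarrow> nat \<Rightarrow> complex) \<Rightarrow> fn4 \<Rightarrow> fn4" where
  "majorana_op_right N E f = (\<lambda>z1 z2 w1 w2.
     (\<Sum>j\<le>N. \<Sum>k\<le>N. mcoef N j * mcoef N k * E j k * w1 ^ k * w2 ^ (N - k) *
        ((pd_w1 ^^ j) ((pd_w2 ^^ (N - j)) f)) z1 z2 w1 w2))"

end

theory Submission
  imports Defs
begin

definition ffc :: "nat \<Rightarrow> nat \<Rightarrow> nat" where "ffc m n = (\<Prod>i<n. m - i)"

lemma ffc_Suc: "ffc m (Suc n) = ffc m n * (m - n)"
  by (simp add: ffc_def)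

lemma ffc_self: "ffc m m = fact m"
  unfolding ffc_def fact_prod_rev by (simp add: atLeast0LessThan)

lemma ffc_gt: "m < n \<Longrightarrow> ffc m n = 0"
  unfolding ffc_def by (rule prod_zero) auto

lemma deriv_polysum:
  "deriv (\<lambda>t. \<Sum>l\<in>A. t ^ p l * K l) x = (\<Sum>l\<in>A. of_nat (p l) * x ^ (p l - 1) * (K l :: complex))"
  by (rule DERIV_imp_deriv) (auto intro!: derivative_eq_intros)

lemma pd_z1_iter:
  "(pd_z1 ^^ n) (\<lambda>z1 z2 w1 w2. \<Sum>l\<in>A. z1 ^ p l * K l z2 w1 w2) =
    (\<lambda>z1 z2 w1 w2. \<Sum>l\<in>A. of_nat (ffc (p l) n) * z1 ^ (p l - n) * K l z2 w1 w2)"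
proof (induction n)
  case 0 then show ?case by (simp add: ffc_def)
next
  case (Suc n)
  have "(pd_z1 ^^ Suc n) (\<lambda>z1 z2 w1 w2. \<Sum>l\<in>A. z1 ^ p l * K l z2 w1 w2)
     = pd_z1 (\<lambda>z1 z2 w1 w2. \<Sum>l\<in>A. z1 ^ (p l - n) * (of_nat (ffc (p l) n) * K l z2 w1 w2))"
    using Suc by (simp add: ac_simps)
  also have "\<dots> = (\<lambda>z1 z2 w1 w2. \<Sum>l\<in>A. of_nat (ffc (p l) (Suc n)) * z1 ^ (p l - Suc n) * K l z2 w1 w2)"
    unfolding pd_z1_def deriv_polysum by (simp add: ffc_Suc ac_simps)
  finally show ?case .
qed

lemma pd_z2_iter:
  "(pd_z2 ^^ n) (\<lambda>z1 z2 w1 w2. \<Sum>l\<in>A. z2 ^ p l * K l z1 w1 w2) =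
    (\<lambda>z1 z2 w1 w2. \<Sum>l\<in>A. of_nat (ffc (p l) n) * z2 ^ (p l - n) * K l z1 w1 w2)"
proof (induction n)
  case 0 then show ?case by (simp add: ffc_def)
next
  case (Suc n)
  have "(pd_z2 ^^ Suc n) (\<lambda>z1 z2 w1 w2. \<Sum>l\<in>A. z2 ^ p l * K l z1 w1 w2)
     = pd_z2 (\<lambda>z1 z2 w1 w2. \<Sum>l\<in>A. z2 ^ (p l - n) * (of_nat (ffc (p l) n) * K l z1 w1 w2))"
    using Suc by (simp add: ac_simps)
  also have "\<dots> = (\<lambda>z1 z2 w1 w2. \<Sum>l\<in>A. of_nat (ffc (p l) (Suc n)) * z2 ^ (p l - Suc n) * K l z1 w1 w2)"
    unfolding pd_z2_def deriv_polysum by (simp add: ffc_Suc ac_simps)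
  finally show ?case .
qed

lemma pd_w1_iter:
  "(pd_w1 ^^ n) (\<lambda>z1 z2 w1 w2. \<Sum>l\<in>A. w1 ^ p l * K l z1 z2 w2) =
    (\<lambda>z1 z2 w1 w2. \<Sum>l\<in>A. of_nat (ffc (p l) n) * w1 ^ (p l - n) * K l z1 z2 w2)"
proof (induction n)
  case 0 then show ?case by (simp add: ffc_def)
next
  case (Suc n)
  have "(pd_w1 ^^ Suc n) (\<lambda>z1 z2 w1 w2. \<Sum>l\<in>A. w1 ^ p l * K l z1 z2 w2)
     = pd_w1 (\<lambda>z1 z2 w1 w2. \<Sum>l\<in>A. w1 ^ (p l - n) * (of_nat (ffc (p l) n) * K l z1 z2 w2))"
    using Suc by (simp add: ac_simps)
  also have "\<dots> = (\<lambda>z1 z2 w1 w2. \<Sum>l\<in>A. of_nat (ffc (p l) (Suc n)) * w1 ^ (p l - Suc n) * K l z1 z2 w2)"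
    unfolding pd_w1_def deriv_polysum by (simp add: ffc_Suc ac_simps)
  finally show ?case .
qed

lemma pd_w2_iter:
  "(pd_w2 ^^ n) (\<lambda>z1 z2 w1 w2. \<Sum>l\<in>A. w2 ^ p l * K l z1 z2 w1) =
    (\<lambda>z1 z2 w1 w2. \<Sum>l\<in>A. of_nat (ffc (p l) n) * w2 ^ (p l - n) * K l z1 z2 w1)"
proof (induction n)
  case 0 then show ?case by (simp add: ffc_def)
next
  case (Suc n)
  have "(pd_w2 ^^ Suc n) (\<lambda>z1 z2 w1 w2. \<Sum>l\<in>A. w2 ^ p l * K l z1 z2 w1)
     = pd_w2 (\<lambda>z1 z2 w1 w2. \<Sum>l\<in>A. w2 ^ (p l - n) * (of_nat (ffc (p l) n) * K l z1 z2 w1))"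
    using Suc by (simp add: ac_simps)
  also have "\<dots> = (\<lambda>z1 z2 w1 w2. \<Sum>l\<in>A. of_nat (ffc (p l) (Suc n)) * w2 ^ (p l - Suc n) * K l z1 z2 w1)"
    unfolding pd_w2_def deriv_polysum by (simp add: ffc_Suc ac_simps)
  finally show ?case .
qed

lemma mcoef_sq:
  assumes "k \<le> N"
  shows "mcoef N k * mcoef N k * of_nat (fact k) * of_nat (fact (N - k)) = (of_nat (fact N) :: complex)"
proof -
  have s: "complex_of_real (sqrt r) * complex_of_real (sqrt r) = of_real r" if "r \<ge> 0" for r
    using that by (simp flip: of_real_mult)
  have "(-1::complex) ^ (N - k) * (-1) ^ (N - k) = 1"
    by (simp flip: power_add add: mult_2[symmetric] power_mult)
  then have "mcoef N k * mcoef N k = of_nat (N choose (N - k))"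
    unfolding mcoef_def
    by (metis (no_types, lifting) mult.assoc mult.left_commute mult_1 of_nat_0_le_iff s of_real_of_nat_eq)
  also have "\<dots> = of_nat (N choose k)" using assms by (simp add: binomial_symmetric[symmetric])
  finally have "mcoef N k * mcoef N k * of_nat (fact k) * of_nat (fact (N - k)) =
      of_nat (fact k * fact (N - k) * (N choose k))" by (simp add: ac_simps)
  also have "\<dots> = of_nat (fact N)" using binomial_fact_lemma[OF assms] by simp
  finally show ?thesis .
qed

lemma collapse:
  assumes "k \<le> N"
  shows "(\<Sum>l\<le>N. of_nat (ffc l k) * x ^ (l - k) * (of_nat (ffc (N - l) (N - k)) * y ^ (N - l - (N - k)) * (G l :: complex)))
     = of_nat (fact k) * of_nat (fact (N - k)) * G k"
proof -
  have "(\<Sum>l\<le>N. of_nat (ffc l k) * x ^ (l - k) * (of_nat (ffc (N - l) (N - k)) * y ^ (N - l - (N - k)) * G l))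
     = of_nat (ffc k k) * x ^ (k - k) * (of_nat (ffc (N - k) (N - k)) * y ^ (N - k - (N - k)) * G k)
       + (\<Sum>l\<in>{..N} - {k}. of_nat (ffc l k) * x ^ (l - k) * (of_nat (ffc (N - l) (N - k)) * y ^ (N - l - (N - k)) * G l))"
    using assms by (subst sum.remove[of _ k]) auto
  also have "(\<Sum>l\<in>{..N} - {k}. of_nat (ffc l k) * x ^ (l - k) * (of_nat (ffc (N - l) (N - k)) * y ^ (N - l - (N - k)) * G l)) = 0"
  proof (rule sum.neutral, intro ballI)
    fix l assume "l \<in> {..N} - {k}"
    then have "l < k \<or> N - l < N - k" using assms by auto
    then show "of_nat (ffc l k) * x ^ (l - k) * (of_nat (ffc (N - l) (N - k)) * y ^ (N - l - (N - k)) * G l) = 0"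
      by (auto simp: ffc_gt)
  qed
  finally show ?thesis by (simp add: ffc_self)
qed

lemma left_part:
  assumes "k \<le> N"
  shows "(pd_z1 ^^ k) ((pd_z2 ^^ (N - k)) (majorana N E)) z1 z2 w1 w2 =
     of_nat (fact k) * of_nat (fact (N - k)) * (\<Sum>m\<le>N. mcoef N k * mcoef N m * E k m * w1 ^ m * w2 ^ (N - m))"
proof -
  define G where "G l w1 w2 = (\<Sum>m\<le>N. mcoef N l * mcoef N m * E l m * w1 ^ m * w2 ^ (N - m))" for l w1 w2
  have "majorana N E = (\<lambda>z1 z2 w1 w2. \<Sum>l\<le>N. z2 ^ (N - l) * (z1 ^ l * G l w1 w2))"
    unfolding majorana_def G_def by (intro ext sum.cong refl) (simp add: sum_distrib_left ac_simps)
  note eq = this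
  have "(pd_z2 ^^ (N - k)) (majorana N E) =
     (\<lambda>z1 z2 w1 w2. \<Sum>l\<le>N. z1 ^ l * (of_nat (ffc (N - l) (N - k)) * z2 ^ (N - l - (N - k)) * G l w1 w2))"
    unfolding eq pd_z2_iter by (simp add: ac_simps)
  then have "(pd_z1 ^^ k) ((pd_z2 ^^ (N - k)) (majorana N E)) =
     (\<lambda>z1 z2 w1 w2. \<Sum>l\<le>N. of_nat (ffc l k) * z1 ^ (l - k) * (of_nat (ffc (N - l) (N - k)) * z2 ^ (N - l - (N - k)) * G l w1 w2))"
    by (simp add: pd_z1_iter)
  then show ?thesis using collapse[OF assms] by (simp add: G_def)
qed

lemma right_part:
  assumes "j \<le> N"
  shows "(pd_w1 ^^ j) ((pd_w2 ^^ (N - j)) (majorana N D)) z1 z2 w1 w2 =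
     of_nat (fact j) * of_nat (fact (N - j)) * (\<Sum>i\<le>N. mcoef N i * mcoef N j * z1 ^ i * z2 ^ (N - i) * D i j)"
proof -
  define G where "G l z1 z2 = (\<Sum>i\<le>N. mcoef N i * mcoef N l * z1 ^ i * z2 ^ (N - i) * D i l)" for l z1 z2
  have "majorana N D = (\<lambda>z1 z2 w1 w2. \<Sum>l\<le>N. w2 ^ (N - l) * (w1 ^ l * G l z1 z2))"
    unfolding majorana_def G_def
    by (intro ext) (subst sum.swap, intro sum.cong refl, simp add: sum_distrib_left sum_distrib_right ac_simps)
  note eq = this
  have "(pd_w2 ^^ (N - j)) (majorana N D) =
     (\<lambda>z1 z2 w1 w2. \<Sum>l\<le>N. w1 ^ l * (of_nat (ffc (N - l) (N - j)) * w2 ^ (N - l - (N - j)) * G l z1 z2))"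
    unfolding eq pd_w2_iter by (simp add: ac_simps)
  then have "(pd_w1 ^^ j) ((pd_w2 ^^ (N - j)) (majorana N D)) =
     (\<lambda>z1 z2 w1 w2. \<Sum>l\<le>N. of_nat (ffc l j) * w1 ^ (l - j) * (of_nat (ffc (N - l) (N - j)) * w2 ^ (N - l - (N - j)) * G l z1 z2))"
    by (simp add: pd_w1_iter)
  then show ?thesis using collapse[OF assms] by (simp add: G_def)
qed

theorem lemma1:
  fixes N :: nat and C D E :: "nat \<Rightarrow> nat \<Rightarrow> complex"
  assumes "N \<ge> 1"
    and "\<And>j k. j \<le> N \<Longrightarrow> k \<le> N \<Longrightarrow> C j k = (\<Sum>l\<le>N. D j l * E l k)"
  shows "majorana N C = (\<lambda>z1 z2 w1 w2.
            majorana_op_left N D (majorana N E) z1 z2 w1 w2 / of_nat (fact N)) \<and>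
         majorana N C = (\<lambda>z1 z2 w1 w2.
            majorana_op_right N E (majorana N D) z1 z2 w1 w2 / of_nat (fact N))"
proof -
  let ?c = "mcoef N"
  have fN: "of_nat (fact N) \<noteq> (0::complex)" by simp
  have C: "majorana N C z1 z2 w1 w2 = (\<Sum>j\<le>N. \<Sum>m\<le>N. \<Sum>k\<le>N.
      ?c j * ?c m * z1 ^ j * z2 ^ (N - j) * D j k * E k m * w1 ^ m * w2 ^ (N - m))" for z1 z2 w1 w2
    unfolding majorana_def
    by (intro sum.cong refl) (simp add: assms(2) sum_distrib_left sum_distrib_right ac_simps)
  have L: "majorana_op_left N D (majorana N E) z1 z2 w1 w2 = of_nat (fact N) * majorana N C z1 z2 w1 w2"
    for z1 z2 w1 w2
  proof -
    have "majorana_op_left N D (majorana N E) z1 z2 w1 w2 = (\<Sum>j\<le>N. \<Sum>k\<le>N. \<Sum>m\<le>N. of_nat (fact N) *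
      (?c j * ?c m * z1 ^ j * z2 ^ (N - j) * D j k * E k m * w1 ^ m * w2 ^ (N - m)))"
      unfolding majorana_op_left_def
    proof (intro sum.cong refl)
      fix j k assume k: "k \<in> {..N}"
      have fk: "of_nat (fact N) = ?c k * ?c k * of_nat (fact k) * of_nat (fact (N - k))"
        using mcoef_sq[of k N] k by simp
      show "?c j * ?c k * z1 ^ j * z2 ^ (N - j) * D j k * (pd_z1 ^^ k) ((pd_z2 ^^ (N - k)) (majorana N E)) z1 z2 w1 w2
        = (\<Sum>m\<le>N. of_nat (fact N) * (?c j * ?c m * z1 ^ j * z2 ^ (N - j) * D j k * E k m * w1 ^ m * w2 ^ (N - m)))"
        unfolding fk using k by (simp add: left_part sum_distrib_left ac_simps)
    qed
    also have "\<dots> = of_nat (fact N) * majorana N C z1 z2 w1 w2"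
      unfolding C sum_distrib_left by (rule sum.cong[OF refl], rule sum.swap)
    finally show ?thesis .
  qed
  have R: "majorana_op_right N E (majorana N D) z1 z2 w1 w2 = of_nat (fact N) * majorana N C z1 z2 w1 w2"
    for z1 z2 w1 w2
  proof -
    have "majorana_op_right N E (majorana N D) z1 z2 w1 w2 = (\<Sum>j\<le>N. \<Sum>k\<le>N. \<Sum>i\<le>N. of_nat (fact N) *
      (?c i * ?c k * z1 ^ i * z2 ^ (N - i) * D i j * E j k * w1 ^ k * w2 ^ (N - k)))"
      unfolding majorana_op_right_def
    proof (intro sum.cong refl)
      fix j k assume j: "j \<in> {..N}"
      have fk: "of_nat (fact N) = ?c j * ?c j * of_nat (fact j) * of_nat (fact (N - j))"
        using mcoef_sq[of j N] j by simp
      show "?c j * ?c k * E j k * w1 ^ k * w2 ^ (N - k) * (pd_w1 ^^ j) ((pd_w2 ^^ (N - j)) (majorana N D)) z1 z2 w1 w2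
        = (\<Sum>i\<le>N. of_nat (fact N) * (?c i * ?c k * z1 ^ i * z2 ^ (N - i) * D i j * E j k * w1 ^ k * w2 ^ (N - k)))"
        unfolding fk using j by (simp add: right_part sum_distrib_left ac_simps)
    qed
    also have "\<dots> = (\<Sum>k\<le>N. \<Sum>j\<le>N. \<Sum>i\<le>N. of_nat (fact N) *
      (?c i * ?c k * z1 ^ i * z2 ^ (N - i) * D i j * E j k * w1 ^ k * w2 ^ (N - k)))"
      by (rule sum.swap)
    also have "\<dots> = (\<Sum>k\<le>N. \<Sum>i\<le>N. \<Sum>j\<le>N. of_nat (fact N) *
      (?c i * ?c k * z1 ^ i * z2 ^ (N - i) * D i j * E j k * w1 ^ k * w2 ^ (N - k)))"
      by (rule sum.cong[OF refl], rule sum.swap)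
    also have "\<dots> = (\<Sum>i\<le>N. \<Sum>k\<le>N. \<Sum>j\<le>N. of_nat (fact N) *
      (?c i * ?c k * z1 ^ i * z2 ^ (N - i) * D i j * E j k * w1 ^ k * w2 ^ (N - k)))"
      by (rule sum.swap)
    also have "\<dots> = of_nat (fact N) * majorana N C z1 z2 w1 w2"
      unfolding C sum_distrib_left by simp
    finally show ?thesis .
  qed
  show ?thesis using L R fN by (auto intro!: ext)
qed

end
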